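(* Let $\gamma > 1$ and let $I$ be a $\gamma$-stable instance of the metric Steiner tree problem with optimal Steiner tree $\mathrm{OPT}$. Suppose $ab$ and $bc$ are two distinct edges of $\mathrm{OPT}$. Then: (1) $w_{ac} > \gamma \cdot \max\{w_{ab}, w_{bc}\}$; (2) $\frac{2}{\gamma} w_{ac} > w_{ab} + w_{bc}$; (3) $(\gamma - 1) w_{ab} < w_{bc}$ and $(\gamma - 1) w_{bc} < w_{ab}$.
   Context: An instance of the metric Steiner tree problem consists of a finite set $V$ of points of a metric space with metric $d$, a set $T \subseteq V$ of terminals, and the complete graph on $V$ with edge weights $w_{uv} = d(u,v)$. Points of $V \setminus T$ are Steiner points. A Steiner tree is a tree in this complete graph whose vertex set contains all of $T$; its weight is the sum of its edge weights. For $\gamma > 1$, the instance is $\gamma$-stable if it has a minimum-weight Steiner tree $\mathrm{OPT}$ such that for every $w' : V \times V \to \mathbb{R}_{\ge 0}$ with $w_{uv} \le w'_{uv} \le \gamma w_{uv}$ for all $u,v$, every minimum-weight Steiner tree with respect to $w'$ equals $\mathrm{OPT}$. *)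

theory Defs
  imports Complex_Main
begin

definition metric_on :: "'a set \<Rightarrow> ('a \<Rightarrow> 'a \<Rightarrow> real) \<Rightarrow> bool" where
  "metric_on V d \<longleftrightarrow>
     (\<forall>u\<in>V. \<forall>v\<in>V. d u v \<ge> 0 \<and> (d u v = 0 \<longleftrightarrow> u = v) \<and> d u v = d v u) \<and>
     (\<forall>u\<in>V. \<forall>v\<in>V. \<forall>x\<in>V. d u x \<le> d u v + d v x)"

definition edges_on :: "'a set \<Rightarrow> 'a set set" where
  "edges_on S = {{u, v} | u v. u \<in> S \<and> v \<in> S \<and> u \<noteq> v}"

definition is_tree :: "'a set \<Rightarrow> 'a set set \<Rightarrow> bool" where
  "is_tree S F \<longleftrightarrow> finite S \<and> S \<noteq> {} \<and> F \<subseteq> edges_on S \<and> card F + 1 = card S \<and>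
     (\<forall>u\<in>S. \<forall>v\<in>S. (u, v) \<in> {(x, y). {x, y} \<in> F}\<^sup>*)"

definition is_steiner_tree :: "'a set \<Rightarrow> 'a set \<Rightarrow> 'a set \<times> 'a set set \<Rightarrow> bool" where
  "is_steiner_tree V T t \<longleftrightarrow> fst t \<subseteq> V \<and> T \<subseteq> fst t \<and> is_tree (fst t) (snd t)"

definition tree_weight :: "('a set \<Rightarrow> real) \<Rightarrow> 'a set \<times> 'a set set \<Rightarrow> real" where
  "tree_weight W t = (\<Sum>e\<in>snd t. W e)"

definition is_min_steiner ::
  "'a set \<Rightarrow> 'a set \<Rightarrow> ('a set \<Rightarrow> real) \<Rightarrow> 'a set \<times> 'a set set \<Rightarrow> bool" where
  "is_min_steiner V T W t \<longleftrightarrow> is_steiner_tree V T t \<and>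
     (\<forall>t'. is_steiner_tree V T t' \<longrightarrow> tree_weight W t \<le> tree_weight W t')"

text \<open>Edge weight induced by the metric: w {u,v} = d u v (well defined since d is symmetric).\<close>
definition metric_weight :: "('a \<Rightarrow> 'a \<Rightarrow> real) \<Rightarrow> 'a set \<Rightarrow> real" where
  "metric_weight d e = (SOME r. \<exists>u v. e = {u, v} \<and> r = d u v)"

definition steiner_instance :: "'a set \<Rightarrow> 'a set \<Rightarrow> ('a \<Rightarrow> 'a \<Rightarrow> real) \<Rightarrow> bool" where
  "steiner_instance V T d \<longleftrightarrow> finite V \<and> T \<subseteq> V \<and> metric_on V d"

definition gamma_perturbation ::
  "real \<Rightarrow> 'a set \<Rightarrow> ('a \<Rightarrow> 'a \<Rightarrow> real) \<Rightarrow> ('a set \<Rightarrow> real) \<Rightarrow> bool" where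
  "gamma_perturbation \<gamma> V d W' \<longleftrightarrow>
     (\<forall>u\<in>V. \<forall>v\<in>V. u \<noteq> v \<longrightarrow> d u v \<le> W' {u, v} \<and> W' {u, v} \<le> \<gamma> * d u v)"

definition stable_instance :: "real \<Rightarrow> 'a set \<Rightarrow> 'a set \<Rightarrow> ('a \<Rightarrow> 'a \<Rightarrow> real) \<Rightarrow> bool" where
  "stable_instance \<gamma> V T d \<longleftrightarrow> steiner_instance V T d \<and>
     (\<exists>OPT. is_min_steiner V T (metric_weight d) OPT \<and>
        (\<forall>W'. gamma_perturbation \<gamma> V d W' \<longrightarrow>
           (\<forall>t. is_min_steiner V T W' t \<longrightarrow> t = OPT)))"

end

theory Submission
  imports Defs
begin

lemma edges_onE:
  assumes "e \<in> edges_on S"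
  obtains u v where "e = {u, v}" "u \<in> S" "v \<in> S" "u \<noteq> v"
  using assms unfolding edges_on_def by blast

lemma in_edges_on:
  assumes "{x, y} \<in> edges_on S"
  shows "x \<in> S \<and> y \<in> S \<and> x \<noteq> y"
proof -
  obtain u v where "{x, y} = {u, v}" "u \<in> S" "v \<in> S" "u \<noteq> v"
    using assms by (rule edges_onE)
  then show ?thesis by (auto simp: doubleton_eq_iff)
qed

lemma conn_card:
  assumes "card F = n" "finite S" "F \<subseteq> edges_on S"
    "\<forall>u\<in>S. \<forall>v\<in>S. (u, v) \<in> {(x, y). {x, y} \<in> F}\<^sup>*"
  shows "card S \<le> card F + 1"
  using assms
proof (induction n arbitrary: S F rule: less_induct)
  case (less n S F)
  have finF: "finite F"
  proof -
    have "edges_on S \<subseteq> Pow S" unfolding edges_on_def by auto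
    then show ?thesis using less.prems(2,3) by (meson finite_Pow_iff finite_subset)
  qed
  show ?case
  proof (cases "F = {}")
    case True
    have "\<forall>u\<in>S. \<forall>v\<in>S. u = v"
    proof (intro ballI)
      fix u v assume "u \<in> S" "v \<in> S"
      then have "(u, v) \<in> {(x, y). {x, y} \<in> F}\<^sup>*" using less.prems(4) by blast
      then show "u = v" using True by (auto elim: rtranclE)
    qed
    then have "card S \<le> Suc 0" using card_le_Suc0_iff_eq[OF less.prems(2)] by blast
    then show ?thesis by simp
  next
    case False
    then obtain e where eF: "e \<in> F" by blast
    have "e \<in> edges_on S" using less.prems(3) eF by (rule subsetD)
    then obtain u v where e: "e = {u, v}" "u \<in> S" "v \<in> S" "u \<noteq> v"
      by (rule edges_onE)
    define f where "f = (\<lambda>z. if z = v then u else z)"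
    define S' where "S' = S - {v}"
    define F' where "F' = (\<lambda>e'. f ` e') ` (F - {e})"
    have cF': "card F' \<le> card F - 1"
      unfolding F'_def using card_image_le[of "F - {e}" "\<lambda>e'. f ` e'"] finF eF
      by (simp add: card_Diff_singleton)
    have fS: "z \<in> S \<Longrightarrow> f z \<in> S'" for z using e unfolding f_def S'_def by auto
    have sub: "F' \<subseteq> edges_on S'"
    proof
      fix g assume "g \<in> F'"
      then obtain e' where e': "e' \<in> F" "e' \<noteq> e" "g = f ` e'" unfolding F'_def by blast
      have "e' \<in> edges_on S" using less.prems(3) e'(1) by (rule subsetD)
      then obtain x y where xy: "e' = {x, y}" "x \<in> S" "y \<in> S" "x \<noteq> y"
        by (rule edges_onE)
      have "f x \<noteq> f y"
      proof
        assume "f x = f y"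
        then have "e' = {u, v}" using xy e unfolding f_def by (auto split: if_splits)
        then show False using e' e by simp
      qed
      then show "g \<in> edges_on S'" unfolding edges_on_def using e' xy fS by auto
    qed
    have estep: "(f x, f y) \<in> {(x, y). {x, y} \<in> F'}\<^sup>*" if "{x, y} \<in> F" for x y
    proof (cases "{x, y} = e")
      case True
      then have "f x = f y" using e unfolding f_def by (auto simp: doubleton_eq_iff)
      then show ?thesis by simp
    next
      case False
      then have "{x, y} \<in> F - {e}" using that by blast
      then have "f ` {x, y} \<in> F'" unfolding F'_def by (rule imageI)
      then have "{f x, f y} \<in> F'" by simp
      then show ?thesis by (simp add: r_into_rtrancl)
    qed
    have conn: "(f x, f y) \<in> {(x, y). {x, y} \<in> F'}\<^sup>*"
      if "(x, y) \<in> {(x, y). {x, y} \<in> F}\<^sup>*" for x y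
      using that
    proof (induction rule: rtrancl_induct)
      case base then show ?case by simp
    next
      case (step y z)
      have "{y, z} \<in> F" using step(2) by simp
      then have "(f y, f z) \<in> {(x, y). {x, y} \<in> F'}\<^sup>*" by (rule estep)
      with step(3) show ?case by (rule rtrancl_trans)
    qed
    have conn': "\<forall>x\<in>S'. \<forall>y\<in>S'. (x, y) \<in> {(x, y). {x, y} \<in> F'}\<^sup>*"
    proof (intro ballI)
      fix x y assume "x \<in> S'" "y \<in> S'"
      then have "f x = x" "f y = y" "x \<in> S" "y \<in> S" unfolding f_def S'_def by auto
      then have "(x, y) \<in> {(x, y). {x, y} \<in> F}\<^sup>*" using less.prems(4) by blast
      then have "(f x, f y) \<in> {(x, y). {x, y} \<in> F'}\<^sup>*" by (rule conn)
      then show "(x, y) \<in> {(x, y). {x, y} \<in> F'}\<^sup>*" using \<open>f x = x\<close> \<open>f y = y\<close> by simp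
    qed
    have "card F > 0" using finF eF by (simp add: card_gt_0_iff; blast)
    then have "card F' < n" using cF' less.prems(1) by linarith
    then have "card S' \<le> card F' + 1"
      using less.IH[of "card F'" F' S'] less.prems(2) sub conn' unfolding S'_def by simp
    moreover have "card S' = card S - 1" unfolding S'_def using e less.prems(2) by simp
    ultimately show ?thesis using cF' \<open>card F > 0\<close> by linarith
  qed
qed

lemma mw:
  assumes "d u v = d v u"
  shows "metric_weight d {u, v} = d u v"
  unfolding metric_weight_def
proof (rule someI2)
  show "\<exists>u' v'. {u, v} = {u', v'} \<and> d u v = d u' v'" by blast
next
  fix r assume "\<exists>u' v'. {u, v} = {u', v'} \<and> r = d u' v'"
  then show "r = d u v" using assms by (auto simp: doubleton_eq_iff)
qed

lemma metric_A:
  assumes "metric_on V d" "u \<in> V" "v \<in> V"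
  shows "d u v = d v u" "d u v \<ge> 0"
proof -
  have A: "\<forall>u\<in>V. \<forall>v\<in>V. d u v \<ge> 0 \<and> (d u v = 0 \<longleftrightarrow> u = v) \<and> d u v = d v u"
    using assms(1) unfolding metric_on_def by auto
  show "d u v = d v u" "d u v \<ge> 0" using A assms(2,3) by simp_all
qed

lemma metric_B:
  assumes "metric_on V d" "u \<in> V" "v \<in> V" "x \<in> V"
  shows "d u x \<le> d u v + d v x"
proof -
  have B: "\<forall>u\<in>V. \<forall>v\<in>V. \<forall>x\<in>V. d u x \<le> d u v + d v x"
    using assms(1) unfolding metric_on_def by auto
  show ?thesis using B assms(2,3,4) by simp
qed

lemma key:
  fixes \<gamma> :: real and V T :: "'a set" and d :: "'a \<Rightarrow> 'a \<Rightarrow> real"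
    and OPT :: "'a set \<times> 'a set set" and a b c :: 'a
  assumes g: "\<gamma> > 1"
    and st: "stable_instance \<gamma> V T d"
    and opt: "is_min_steiner V T (metric_weight d) OPT"
    and ab: "{a, b} \<in> snd OPT" and bc: "{b, c} \<in> snd OPT" and ne: "{a, b} \<noteq> {b, c}"
  shows "\<gamma> * d a b < d a c"
proof -
  define S where "S = fst OPT"
  define F where "F = snd OPT"
  have stt: "is_steiner_tree V T OPT" using opt unfolding is_min_steiner_def by blast
  have SV: "S \<subseteq> V" and TS: "T \<subseteq> S" and tree: "is_tree S F"
    using stt unfolding is_steiner_tree_def S_def F_def by auto
  have finS: "finite S" and FS: "F \<subseteq> edges_on S" and cardF: "card F + 1 = card S"
    and connF: "\<forall>u\<in>S. \<forall>v\<in>S. (u, v) \<in> {(x, y). {x, y} \<in> F}\<^sup>*"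
    using tree unfolding is_tree_def by auto
  have finF: "finite F"
  proof -
    have "edges_on S \<subseteq> Pow S" unfolding edges_on_def by auto
    then show ?thesis using finS FS by (meson finite_Pow_iff finite_subset)
  qed
  have abF: "{a, b} \<in> F" and bcF: "{b, c} \<in> F" using ab bc F_def by auto
  have edge: "x \<in> S \<and> y \<in> S \<and> x \<noteq> y" if "{x, y} \<in> F" for x y
    using in_edges_on[OF subsetD[OF FS that]] .
  have aS: "a \<in> S" and bS: "b \<in> S" and cS: "c \<in> S" and anb: "a \<noteq> b" and bnc: "b \<noteq> c"
    using edge[OF abF] edge[OF bcF] by auto
  have anc: "a \<noteq> c" using ne by (auto simp: insert_commute)
  have met: "metric_on V d" using st unfolding stable_instance_def steiner_instance_def by blast
  have dsym: "u \<in> V \<Longrightarrow> v \<in> V \<Longrightarrow> d u v = d v u" for u v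
    using metric_A[OF met] by blast
  have dpos: "u \<in> V \<Longrightarrow> v \<in> V \<Longrightarrow> d u v \<ge> 0" for u v
    using metric_A[OF met] by blast
  have mwV: "u \<in> V \<Longrightarrow> v \<in> V \<Longrightarrow> metric_weight d {u, v} = d u v" for u v
    using mw dsym by metis
  obtain OPT0 where opt0: "is_min_steiner V T (metric_weight d) OPT0"
    and uniq: "\<And>W' t. gamma_perturbation \<gamma> V d W' \<Longrightarrow> is_min_steiner V T W' t \<Longrightarrow> t = OPT0"
    using st unfolding stable_instance_def by blast
  have "gamma_perturbation \<gamma> V d (metric_weight d)"
    unfolding gamma_perturbation_def
  proof (intro ballI impI)
    fix u v assume "u \<in> V" "v \<in> V" "u \<noteq> v"
    then show "d u v \<le> metric_weight d {u, v} \<and> metric_weight d {u, v} \<le> \<gamma> * d u v"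
      using mwV dpos[of u v] g by (simp add: mult_le_cancel_right1)
  qed
  then have OPTeq: "OPT = OPT0" using uniq opt by metis
  define W' where "W' = (\<lambda>e. if e \<in> F then \<gamma> * metric_weight d e else metric_weight d e)"
  have pert: "gamma_perturbation \<gamma> V d W'"
    unfolding gamma_perturbation_def
  proof (intro ballI impI)
    fix u v assume "u \<in> V" "v \<in> V" "u \<noteq> v"
    then show "d u v \<le> W' {u, v} \<and> W' {u, v} \<le> \<gamma> * d u v"
      using mwV dpos[of u v] g unfolding W'_def by (simp add: mult_le_cancel_right1)
  qed
  define ST where "ST = {t. is_steiner_tree V T t}"
  have finST: "finite ST"
  proof -
    have "ST \<subseteq> Pow V \<times> Pow (Pow V)"
    proof
      fix t assume "t \<in> ST"
      then have t1: "fst t \<subseteq> V" and t2: "snd t \<subseteq> edges_on (fst t)"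
        unfolding ST_def is_steiner_tree_def is_tree_def by auto
      have "edges_on (fst t) \<subseteq> Pow (fst t)" unfolding edges_on_def by auto
      then have "snd t \<subseteq> Pow V" using t1 t2 by blast
      then show "t \<in> Pow V \<times> Pow (Pow V)" using t1 by (cases t) auto
    qed
    moreover have "finite V" using st unfolding stable_instance_def steiner_instance_def by blast
    ultimately show ?thesis by (meson finite_Pow_iff finite_SigmaI finite_subset)
  qed
  have "OPT \<in> ST" using stt ST_def by blast
  then have neST: "ST \<noteq> {}" by blast
  define t0 where "t0 = arg_min_on (tree_weight W') ST"
  have "t0 \<in> ST" using arg_min_if_finite(1)[OF finST neST] t0_def by simp
  moreover have "\<not> (\<exists>x\<in>ST. tree_weight W' x < tree_weight W' t0)"
    using arg_min_if_finite(2)[OF finST neST] t0_def by simp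
  ultimately have "is_min_steiner V T W' t0"
    unfolding is_min_steiner_def ST_def by (auto simp: not_less)
  then have "t0 = OPT" using uniq[OF pert] OPTeq by blast
  then have OPTmin: "is_min_steiner V T W' OPT" using \<open>is_min_steiner V T W' t0\<close> by simp
  have path_ab: "(a, b) \<in> {(x, y). {x, y} \<in> F - {{a, b}}}\<^sup>*" if acF: "{a, c} \<in> F"
  proof -
    have "{a, c} \<noteq> {a, b}" using bnc by (auto simp: doubleton_eq_iff)
    then have "(a, c) \<in> {(x, y). {x, y} \<in> F - {{a, b}}}" using acF by simp
    moreover have "(c, b) \<in> {(x, y). {x, y} \<in> F - {{a, b}}}"
      using bcF ne by (simp add: insert_commute)
    ultimately show ?thesis by (meson r_into_rtrancl rtrancl_trans)
  qed
  have acnF: "{a, c} \<notin> F"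
  proof
    assume acF: "{a, c} \<in> F"
    let ?G = "F - {{a, b}}"
    have "{(x, y). {x, y} \<in> F} \<subseteq> {(x, y). {x, y} \<in> ?G}\<^sup>*"
    proof clarify
      fix x y assume xy: "{x, y} \<in> F"
      show "(x, y) \<in> {(x, y). {x, y} \<in> ?G}\<^sup>*"
      proof (cases "{x, y} = {a, b}")
        case True
        then have "(x = a \<and> y = b) \<or> (x = b \<and> y = a)" by (auto simp: doubleton_eq_iff)
        moreover have "(b, a) \<in> {(x, y). {x, y} \<in> ?G}\<^sup>*"
        proof -
          have "{a, c} \<noteq> {a, b}" using bnc by (auto simp: doubleton_eq_iff)
          then have "(c, a) \<in> {(x, y). {x, y} \<in> ?G}" using acF by (simp add: insert_commute)
          moreover have "(b, c) \<in> {(x, y). {x, y} \<in> ?G}"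
            using bcF ne by (simp add: insert_commute)
          ultimately show ?thesis by (meson r_into_rtrancl rtrancl_trans)
        qed
        ultimately show ?thesis using path_ab acF by blast
      next
        case False
        then show ?thesis using xy by auto
      qed
    qed
    then have "{(x, y). {x, y} \<in> F}\<^sup>* \<subseteq> {(x, y). {x, y} \<in> ?G}\<^sup>*"
      by (rule rtrancl_subset_rtrancl)
    then have "\<forall>u\<in>S. \<forall>v\<in>S. (u, v) \<in> {(x, y). {x, y} \<in> ?G}\<^sup>*" using connF by blast
    moreover have "?G \<subseteq> edges_on S" using FS by blast
    ultimately have "card S \<le> card ?G + 1" using conn_card finS by blast
    moreover have "card ?G = card F - 1" using abF finF by simp
    moreover have "card F > 0" using finF abF by (simp add: card_gt_0_iff; blast)
    ultimately show False using cardF by linarith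
  qed
  define F' where "F' = insert {a, c} (F - {{a, b}})"
  define t' where "t' = (S, F')"
  have acab: "{a, c} \<noteq> {a, b}" using bnc by (auto simp: doubleton_eq_iff)
  have cardF': "card F' = card F"
    proof -
    have "F \<noteq> {}" using abF by blast
    then have "card F > 0" using finF by (simp add: card_gt_0_iff)
    then show ?thesis unfolding F'_def using acnF abF finF by simp
  qed
  have "{(x, y). {x, y} \<in> F} \<subseteq> {(x, y). {x, y} \<in> F'}\<^sup>*"
  proof clarify
    fix x y assume xy: "{x, y} \<in> F"
    have ac': "(a, c) \<in> {(x, y). {x, y} \<in> F'}" "(c, a) \<in> {(x, y). {x, y} \<in> F'}"
      unfolding F'_def by (auto simp: insert_commute)
    have bc': "(b, c) \<in> {(x, y). {x, y} \<in> F'}" "(c, b) \<in> {(x, y). {x, y} \<in> F'}"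
      unfolding F'_def using bcF ne by (auto simp: insert_commute)
    show "(x, y) \<in> {(x, y). {x, y} \<in> F'}\<^sup>*"
    proof (cases "{x, y} = {a, b}")
      case True
      then have "(x = a \<and> y = b) \<or> (x = b \<and> y = a)" by (auto simp: doubleton_eq_iff)
      then show ?thesis using ac' bc' by (meson r_into_rtrancl rtrancl_trans)
    next
      case False
      then show ?thesis using xy unfolding F'_def by auto
    qed
  qed
  then have "{(x, y). {x, y} \<in> F}\<^sup>* \<subseteq> {(x, y). {x, y} \<in> F'}\<^sup>*"
    by (rule rtrancl_subset_rtrancl)
  then have connF': "\<forall>u\<in>S. \<forall>v\<in>S. (u, v) \<in> {(x, y). {x, y} \<in> F'}\<^sup>*" using connF by blast
  have "{a, c} \<in> edges_on S" using aS cS anc unfolding edges_on_def by blast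
  then have "F' \<subseteq> edges_on S" using FS unfolding F'_def by blast
  then have "is_tree S F'" using finS tree cardF' connF' unfolding is_tree_def by auto
  then have stt': "is_steiner_tree V T t'" using SV TS unfolding t'_def is_steiner_tree_def by simp
  have "t' \<noteq> OPT"
  proof
    assume "t' = OPT"
    then have "F' = F" unfolding t'_def F_def by auto
    moreover have "{a, b} \<notin> F'" unfolding F'_def using acab by auto
    ultimately show False using abF by simp
  qed
  then have "\<not> is_min_steiner V T W' t'" using uniq[OF pert] OPTeq by blast
  then obtain t'' where "is_steiner_tree V T t''" "tree_weight W' t'' < tree_weight W' t'"
    using stt' unfolding is_min_steiner_def by (auto simp: not_le)
  then have lt: "tree_weight W' OPT < tree_weight W' t'"
    using OPTmin unfolding is_min_steiner_def by fastforce
  have "tree_weight W' t' = W' {a, c} + sum W' (F - {{a, b}})"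
    unfolding tree_weight_def t'_def F'_def using finF acnF by simp
  moreover have "tree_weight W' OPT = W' {a, b} + sum W' (F - {{a, b}})"
    unfolding tree_weight_def F_def[symmetric] using finF abF by (simp add: sum.remove)
  moreover have "W' {a, c} = d a c" unfolding W'_def using acnF mwV aS cS SV by auto
  moreover have "W' {a, b} = \<gamma> * d a b" unfolding W'_def using abF mwV aS bS SV by auto
  ultimately show ?thesis using lt by linarith
qed

theorem mainTheorem6:
  fixes \<gamma> :: real and V T :: "'a set" and d :: "'a \<Rightarrow> 'a \<Rightarrow> real"
    and OPT :: "'a set \<times> 'a set set" and a b c :: 'a
  assumes "\<gamma> > 1"
    and "stable_instance \<gamma> V T d"
    and "is_min_steiner V T (metric_weight d) OPT"
    and "{a, b} \<in> snd OPT" and "{b, c} \<in> snd OPT" and "{a, b} \<noteq> {b, c}"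
  shows "d a c > \<gamma> * max (d a b) (d b c) \<and>
         (2 / \<gamma>) * d a c > d a b + d b c \<and>
         ((\<gamma> - 1) * d a b < d b c \<and> (\<gamma> - 1) * d b c < d a b)"
proof -
  have k1: "\<gamma> * d a b < d a c" using key[OF assms] .
  have k2: "\<gamma> * d c b < d c a"
    using key[of \<gamma> V T d OPT c b a] assms by (auto simp: insert_commute)
  have met: "metric_on V d" using assms(2) unfolding stable_instance_def steiner_instance_def by blast
  have stt: "is_steiner_tree V T OPT" using assms(3) unfolding is_min_steiner_def by blast
  have "snd OPT \<subseteq> edges_on (fst OPT)" "fst OPT \<subseteq> V"
    using stt unfolding is_steiner_tree_def is_tree_def by auto
  then have mem: "x \<in> V \<and> y \<in> V" if "{x, y} \<in> snd OPT" for x y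
    using in_edges_on[OF subsetD[OF \<open>snd OPT \<subseteq> edges_on (fst OPT)\<close> that]] \<open>fst OPT \<subseteq> V\<close> by blast
  have inV: "a \<in> V" "b \<in> V" "c \<in> V" using mem assms(4,5) by auto
  have sym: "d c b = d b c" "d c a = d a c" using metric_A(1)[OF met] inV by auto
  have tri: "d a c \<le> d a b + d b c" using metric_B[OF met] inV by blast
  have m: "d a c > \<gamma> * max (d a b) (d b c)" using k1 k2 sym by (simp add: max_def)
  have "\<gamma> * (d a b + d b c) < 2 * d a c" using k1 k2 sym by (simp add: algebra_simps)
  then have "(2 / \<gamma>) * d a c > d a b + d b c" using assms(1)
    by (simp add: field_simps)
  moreover have "(\<gamma> - 1) * d a b < d b c" using k1 tri by (simp add: algebra_simps)
  moreover have "(\<gamma> - 1) * d b c < d a b" using k2 sym tri by (simp add: algebra_simps)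
  ultimately show ?thesis using m by blast
qed

end
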